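(* Let $n\ge 1$ be an integer and let $M=(M_0,\dots,M_{2n})^T\in\mathbb R^{2n+1}$. For $\sigma>0$ define $M^*(\sigma)=(M_0^*(\sigma),\dots,M_{2n}^*(\sigma))$ by $$M_j^*(\sigma)=\sum_{k=0}^j b_k\sigma^k\frac{j!}{(j-k)!}M_{j-k},$$ and set $P_n(\sigma;M)=\det H_n(M^*(\sigma))$. The following statements are equivalent: (i) There exists a unique $W=(w_1,u_1,\dots,w_n,u_n,\sigma)\in\Omega:=\Omega'\times\{\sigma>0\}$, where $$\Omega'=\{(w_1,u_1,\dots,w_n,u_n)\in\mathbb R^{2n}: w_i>0\ \forall i,\ u_1<\dots<u_n\},$$ such that $\mathcal M(W)=M$. (ii) The equation $P_n(\sigma;M)=0$ has a unique positive root $\sigma_0$ such that the Hankel matrix $H_{n-1}(M^*(\sigma_0))$ is positive definite.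
   Context: Let $\mathcal K:\mathbb R\to[0,\infty)$ be a kernel with $\mathfrak m_j:=\int_{\mathbb R}\xi^j\mathcal K(\xi)\,d\xi<\infty$ for all $j\in\mathbb N$; the kernel is assumed normalized: $\mathfrak m_0=1$, $\mathfrak m_1=0$, $\mathfrak m_2=1$. For $u\in\mathbb R$, $\sigma>0$ let $\Delta_j(u,\sigma)=\int_{\mathbb R}\xi^j\frac1\sigma\mathcal K\!\left(\frac{\xi-u}{\sigma}\right)d\xi=\sum_{k=0}^j\binom jk\mathfrak m_k\sigma^ku^{j-k}$. For $W=(w_1,u_1,\dots,w_n,u_n,\sigma)$ with $\sigma>0$, the map $\mathcal M(W)=(M_0,\dots,M_{2n})^T$ is given by $M_j=\sum_{i=1}^n w_i\Delta_j(u_i,\sigma)$, $j=0,\dots,2n$. The numbers $b_j$ are defined recursively by $b_0=1$ and $b_j=-\sum_{k=1}^j\frac{\mathfrak m_k}{k!}b_{j-k}$ for $j\ge1$. For a vector $N=(N_0,\dots,N_{2n})$ and $k\le n$, the Hankel matrix $H_k(N)$ is the $(k+1)\times(k+1)$ matrix with $(p,q)$ entry $N_{p+q}$, $0\le p,q\le k$. *)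

theory Defs
  imports "HOL-Analysis.Analysis" "Jordan_Normal_Form.Determinant"
begin

definition kmom :: "(real \<Rightarrow> real) \<Rightarrow> nat \<Rightarrow> real" where
  "kmom K j = (LINT x|lborel. x ^ j * K x)"

definition Delta :: "(nat \<Rightarrow> real) \<Rightarrow> nat \<Rightarrow> real \<Rightarrow> real \<Rightarrow> real" where
  "Delta m j u \<sigma> = (\<Sum>k\<le>j. real (j choose k) * m k * \<sigma> ^ k * u ^ (j - k))"

text \<open>The moment map, components w, u given as lists of length n (0-based indices).\<close>
definition Mmap :: "(nat \<Rightarrow> real) \<Rightarrow> real list \<Rightarrow> real list \<Rightarrow> real \<Rightarrow> nat \<Rightarrow> real" where
  "Mmap m w u \<sigma> j = (\<Sum>i<length w. w ! i * Delta m j (u ! i) \<sigma>)"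

function bcoef :: "(nat \<Rightarrow> real) \<Rightarrow> nat \<Rightarrow> real" where
  "bcoef m j = (if j = 0 then 1
     else - (\<Sum>k\<in>{1..j}. m k / fact k * bcoef m (j - k)))"
  by pat_completeness auto
termination
  by (relation "Wellfounded.measure (\<lambda>(m, j). j)") auto

definition Mstar :: "(nat \<Rightarrow> real) \<Rightarrow> (nat \<Rightarrow> real) \<Rightarrow> real \<Rightarrow> nat \<Rightarrow> real" where
  "Mstar m M \<sigma> j = (\<Sum>k\<le>j. bcoef m k * \<sigma> ^ k * (fact j / fact (j - k)) * M (j - k))"

definition hankel :: "nat \<Rightarrow> (nat \<Rightarrow> real) \<Rightarrow> real mat" where
  "hankel k N = Matrix.mat (k + 1) (k + 1) (\<lambda>(p, q). N (p + q))"

definition pos_def_mat :: "real mat \<Rightarrow> bool" where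
  "pos_def_mat A \<longleftrightarrow> A \<in> carrier_mat (dim_row A) (dim_row A) \<and> A\<^sup>T = A \<and>
     (\<forall>v \<in> carrier_vec (dim_row A). v \<noteq> 0\<^sub>v (dim_row A) \<longrightarrow> v \<bullet> (A *\<^sub>v v) > 0)"

definition Pn :: "(nat \<Rightarrow> real) \<Rightarrow> nat \<Rightarrow> (nat \<Rightarrow> real) \<Rightarrow> real \<Rightarrow> real" where
  "Pn m n M \<sigma> = Determinant.det (hankel n (Mstar m M \<sigma>))"

end

theory Submission
  imports Defs "HOL-Computational_Algebra.Formal_Power_Series" "Jordan_Normal_Form.Char_Poly"
    "HOL-Computational_Algebra.Fundamental_Theorem_Algebra"
begin

declare bcoef.simps[simp del]

definition TA :: "(nat \<Rightarrow> real) \<Rightarrow> real \<Rightarrow> (nat \<Rightarrow> real) \<Rightarrow> nat \<Rightarrow> real" where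
  "TA m s X j = (\<Sum>k\<le>j. real (j choose k) * m k * s ^ k * X (j - k))"

definition EF :: "(nat \<Rightarrow> real) \<Rightarrow> real fps" where
  "EF X = Abs_fps (\<lambda>j. X j / fact j)"

lemma EF_inj: "EF X = EF Y \<Longrightarrow> X = Y"
proof
  fix j assume "EF X = EF Y"
  then have "fps_nth (EF X) j = fps_nth (EF Y) j" by simp
  then show "X j = Y j" by (simp add: EF_def)
qed

lemma EF_TA: "EF (TA m s X) = Abs_fps (\<lambda>k. m k * s ^ k / fact k) * EF X"
proof (rule fps_ext)
  fix j
  have "fps_nth (EF (TA m s X)) j = (\<Sum>k\<le>j. real (j choose k) * m k * s ^ k * X (j - k)) / fact j"
    by (simp add: EF_def TA_def)
  also have "\<dots> = (\<Sum>k\<le>j. m k * s ^ k / fact k * (X (j - k) / fact (j - k)))"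
    unfolding sum_divide_distrib
  proof (rule sum.cong)
    fix k assume "k \<in> {..j}"
    then have "k \<le> j" by simp
    then show "real (j choose k) * m k * s ^ k * X (j - k) / fact j = m k * s ^ k / fact k * (X (j - k) / fact (j - k))"
      by (simp add: binomial_fact field_simps)
  qed simp
  also have "\<dots> = fps_nth (Abs_fps (\<lambda>k. m k * s ^ k / fact k) * EF X) j"
    by (simp add: fps_mult_nth EF_def atLeast0AtMost)
  finally show "fps_nth (EF (TA m s X)) j = fps_nth (Abs_fps (\<lambda>k. m k * s ^ k / fact k) * EF X) j" .
qed

lemma EF_TB: "EF (Mstar m X s) = Abs_fps (\<lambda>k. bcoef m k * s ^ k) * EF X"
proof (rule fps_ext)
  fix j
  have "fps_nth (EF (Mstar m X s)) j = (\<Sum>k\<le>j. bcoef m k * s ^ k * (fact j / fact (j - k)) * X (j - k)) / fact j"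
    by (simp add: EF_def Mstar_def)
  also have "\<dots> = (\<Sum>k\<le>j. bcoef m k * s ^ k * (X (j - k) / fact (j - k)))"
    unfolding sum_divide_distrib
    by (rule sum.cong) (simp_all add: field_simps)
  also have "\<dots> = fps_nth (Abs_fps (\<lambda>k. bcoef m k * s ^ k) * EF X) j"
    by (simp add: fps_mult_nth EF_def atLeast0AtMost)
  finally show "fps_nth (EF (Mstar m X s)) j = fps_nth (Abs_fps (\<lambda>k. bcoef m k * s ^ k) * EF X) j" .
qed

lemma AB_one:
  assumes m0: "m 0 = 1"
  shows "Abs_fps (\<lambda>k. m k * s ^ k / fact k) * Abs_fps (\<lambda>k. bcoef m k * s ^ k) = 1"
proof (rule fps_ext)
  fix j
  have "fps_nth (Abs_fps (\<lambda>k. m k * s ^ k / fact k) * Abs_fps (\<lambda>k. bcoef m k * s ^ k)) j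
      = (\<Sum>i=0..j. m i * s ^ i / fact i * (bcoef m (j - i) * s ^ (j - i)))"
    by (simp add: fps_mult_nth)
  also have "\<dots> = s ^ j * (\<Sum>i=0..j. m i / fact i * bcoef m (j - i))"
    unfolding sum_distrib_left
    by (rule sum.cong) (simp_all add: field_simps flip: power_add)
  also have "\<dots> = (if j = 0 then 1 else 0)"
  proof (cases "j = 0")
    case True then show ?thesis by (simp add: m0 bcoef.simps)
  next
    case False
    have "(\<Sum>i=0..j. m i / fact i * bcoef m (j - i)) = m 0 / fact 0 * bcoef m j + (\<Sum>i=1..j. m i / fact i * bcoef m (j - i))"
      by (simp add: sum.atLeast_Suc_atMost)
    also have "\<dots> = 0" using False by (simp add: m0 bcoef.simps[of m j])
    finally show ?thesis using False by simp
  qed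
  finally show "fps_nth (Abs_fps (\<lambda>k. m k * s ^ k / fact k) * Abs_fps (\<lambda>k. bcoef m k * s ^ k)) j = fps_nth 1 j"
    by simp
qed

lemma TB_TA: assumes "m 0 = 1" shows "Mstar m (TA m s X) s = X"
proof (rule EF_inj)
  have "EF (Mstar m (TA m s X) s) = (Abs_fps (\<lambda>k. m k * s ^ k / fact k) * Abs_fps (\<lambda>k. bcoef m k * s ^ k)) * EF X"
    unfolding EF_TB EF_TA by (simp only: mult_ac)
  then show "EF (Mstar m (TA m s X) s) = EF X" by (simp only: AB_one[of m s, OF assms] mult_1)
qed

lemma TA_TB: assumes "m 0 = 1" shows "TA m s (Mstar m X s) = X"
proof (rule EF_inj)
  have "EF (TA m s (Mstar m X s)) = (Abs_fps (\<lambda>k. m k * s ^ k / fact k) * Abs_fps (\<lambda>k. bcoef m k * s ^ k)) * EF X"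
    unfolding EF_TB EF_TA by (simp only: mult_ac)
  then show "EF (TA m s (Mstar m X s)) = EF X" by (simp only: AB_one[of m s, OF assms] mult_1)
qed

lemma TA_local: "(\<And>i. i \<le> j \<Longrightarrow> X i = Y i) \<Longrightarrow> TA m s X j = TA m s Y j"
  unfolding TA_def by (rule sum.cong) auto

lemma TB_local: "(\<And>i. i \<le> j \<Longrightarrow> X i = Y i) \<Longrightarrow> Mstar m X s j = Mstar m Y s j"
  unfolding Mstar_def by (rule sum.cong) auto

lemma TA_TB_equiv:
  assumes "m 0 = 1"
  shows "(\<forall>j\<le>J. TA m s D j = M j) \<longleftrightarrow> (\<forall>j\<le>J. Mstar m M s j = D j)"
proof
  assume h: "\<forall>j\<le>J. TA m s D j = M j"
  show "\<forall>j\<le>J. Mstar m M s j = D j"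
  proof (intro allI impI)
    fix j assume "j \<le> J"
    then have "Mstar m M s j = Mstar m (TA m s D) s j" by (intro TB_local) (use h in auto)
    then show "Mstar m M s j = D j" using TB_TA[of m s D, OF assms] by simp
  qed
next
  assume h: "\<forall>j\<le>J. Mstar m M s j = D j"
  show "\<forall>j\<le>J. TA m s D j = M j"
  proof (intro allI impI)
    fix j assume "j \<le> J"
    then have "TA m s D j = TA m s (Mstar m M s) j" by (intro TA_local) (use h in auto)
    then show "TA m s D j = M j" using TA_TB[of m s M, OF assms] by simp
  qed
qed

lemma Mmap_TA: "Mmap m w u s j = TA m s (\<lambda>i. \<Sum>k<length w. w ! k * (u ! k) ^ i) j"
proof -
  have "Mmap m w u s j = (\<Sum>k<length w. \<Sum>i\<le>j. w ! k * (real (j choose i) * m i * s ^ i * (u ! k) ^ (j - i)))"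
    unfolding Mmap_def Delta_def by (simp add: sum_distrib_left)
  also have "\<dots> = (\<Sum>i\<le>j. \<Sum>k<length w. real (j choose i) * m i * s ^ i * (w ! k * (u ! k) ^ (j - i)))"
    by (subst sum.swap) (simp add: mult_ac)
  also have "\<dots> = TA m s (\<lambda>i. \<Sum>k<length w. w ! k * (u ! k) ^ i) j"
    unfolding TA_def by (simp add: sum_distrib_left)
  finally show ?thesis .
qed

interpretation ofr: map_poly_comm_ring_hom "of_real :: real \<Rightarrow> complex" ..

lemma split_quad:
  fixes p :: "real poly"
  assumes deg: "degree p > 0" and nr: "\<And>x. poly p x \<noteq> 0"
  shows "\<exists>a b s. b \<noteq> 0 \<and> p = [:a^2+b^2, -2*a, 1:] * s"
proof -
  let ?P = "map_poly complex_of_real p"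
  have "degree ?P = degree p" by simp
  then have "\<not> constant (poly ?P)" using deg by (simp add: constant_degree)
  then obtain z where z: "poly ?P z = 0" using fundamental_theorem_of_algebra by blast
  define a where "a = Re z"
  define b where "b = Im z"
  have zab: "z = Complex a b" by (simp add: a_def b_def)
  have "b \<noteq> 0"
  proof
    assume "b = 0"
    then have "z = of_real a" by (simp add: zab Complex_eq)
    then have "of_real (poly p a) = (0::complex)" using z by simp
    then show False using nr by simp
  qed
  define D where "D = [:a^2+b^2, -2*a, 1:]"
  have D0: "D \<noteq> 0" by (simp add: D_def)
  have degD: "degree D = 2" by (simp add: D_def)
  have PD: "poly (map_poly complex_of_real D) z = 0"
    by (simp add: D_def zab Complex_eq algebra_simps power2_eq_square)
  obtain g r where pr: "p = g * D + r" and rdeg: "degree r < 2 \<or> r = 0"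
    using degree_mod_less[OF D0, of p] degD div_mult_mod_eq[of p D, symmetric] by metis
  have "poly (map_poly complex_of_real r) z = 0"
  proof -
    have "map_poly complex_of_real p = map_poly complex_of_real g * map_poly complex_of_real D + map_poly complex_of_real r"
      by (subst pr) (simp only: ofr.hom_mult ofr.hom_add)
    then show ?thesis using z PD by simp
  qed
  have r0: "r = 0"
  proof (cases "r = 0")
    case False
    then have d1: "degree r \<le> 1" using rdeg by auto
    have rs: "r = (\<Sum>i\<le>1. monom (coeff r i) i)" by (rule poly_as_sum_of_monoms'[OF d1, symmetric])
    have "poly (map_poly complex_of_real r) z = of_real (coeff r 0) + of_real (coeff r 1) * z"
      by (subst rs) (simp add: hom_distribs poly_monom)
    with \<open>poly (map_poly complex_of_real r) z = 0\<close>
    have e: "of_real (coeff r 0) + of_real (coeff r 1) * Complex a b = 0" by (simp add: zab)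
    have "Im (of_real (coeff r 0) + of_real (coeff r 1) * Complex a b) = 0" using e by simp
    then have "coeff r 1 * b = 0" by simp
    then have c1: "coeff r 1 = 0" using \<open>b \<noteq> 0\<close> by simp
    have "Re (of_real (coeff r 0) + of_real (coeff r 1) * Complex a b) = 0" using e by simp
    then have c0: "coeff r 0 = 0" using c1 by simp
    have c1': "coeff r (Suc 0) = 0" using c1 by simp
    have "r = 0" by (subst rs) (simp add: c0 c1')
    then show ?thesis .
  qed simp
  show ?thesis using pr r0 \<open>b \<noteq> 0\<close> D_def by (metis add.right_neutral mult.commute)
qed

lemma roots_card:
  fixes p :: "real poly"
  assumes "p \<noteq> 0"
   and "\<And>t s. p \<noteq> [:-t,1:] * [:-t,1:] * s"
   and "\<And>a b s. b \<noteq> 0 \<Longrightarrow> p \<noteq> [:a^2+b^2,-2*a,1:] * s"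
  shows "card {x. poly p x = 0} = degree p"
  using assms
proof (induction "degree p" arbitrary: p rule: less_induct)
  case (less p)
  show ?case
  proof (cases "degree p = 0")
    case True
    then obtain c where "p = [:c:]" by (metis degree_eq_zeroE)
    then have "{x. poly p x = 0} = {}" using less.prems(1) by auto
    then show ?thesis using True by simp
  next
    case False
    show ?thesis
    proof (cases "\<exists>x. poly p x = 0")
      case False2: False
      then obtain a b s where "b \<noteq> 0" "p = [:a^2+b^2,-2*a,1:] * s"
        using split_quad[of p] False by auto
      then show ?thesis using less.prems(3) by blast
    next
      case True
      then obtain t where t: "poly p t = 0" by blast
      then have "[:-t,1:] dvd p" by (simp add: poly_eq_0_iff_dvd)
      then obtain s where ps: "p = [:-t,1:] * s" by (auto simp: dvd_def)
      have s0: "s \<noteq> 0" using less.prems(1) ps by auto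
      have degs: "degree p = Suc (degree s)" unfolding ps using s0 by (subst degree_mult_eq) auto
      have st: "poly s t \<noteq> 0"
      proof
        assume "poly s t = 0"
        then have "[:-t,1:] dvd s" by (simp add: poly_eq_0_iff_dvd)
        then obtain s' where "s = [:-t,1:] * s'" by (auto simp: dvd_def)
        then have "p = [:-t,1:] * [:-t,1:] * s'" using ps by (simp only: mult_ac)
        then show False using less.prems(2) by blast
      qed
      have IH: "card {x. poly s x = 0} = degree s"
      proof (rule less.hyps)
        show "degree s < degree p" using degs by simp
        show "s \<noteq> 0" by fact
        show "s \<noteq> [:-t',1:] * [:-t',1:] * s'" for t' s'
        proof
          assume "s = [:-t',1:] * [:-t',1:] * s'"
          then have "p = [:-t',1:] * [:-t',1:] * ([:-t,1:] * s')" using ps by (simp only: mult_ac)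
          then show False using less.prems(2) by blast
        qed
        show "s \<noteq> [:a^2+b^2,-2*a,1:] * s'" if "b \<noteq> 0" for a b s'
        proof
          assume "s = [:a^2+b^2,-2*a,1:] * s'"
          then have "p = [:a^2+b^2,-2*a,1:] * ([:-t,1:] * s')" using ps by (simp only: mult_ac)
          then show False using less.prems(3) that by blast
        qed
      qed
      have "{x. poly p x = 0} = insert t {x. poly s x = 0}" using ps t by auto
      moreover have "t \<notin> {x. poly s x = 0}" using st by simp
      moreover have "finite {x. poly s x = 0}" using s0 by (rule poly_roots_finite)
      ultimately show ?thesis using IH degs by simp
    qed
  qed
qed

definition LF :: "(nat \<Rightarrow> real) \<Rightarrow> real poly \<Rightarrow> real" where
  "LF N p = (\<Sum>j\<le>degree p. coeff p j * N j)"

lemma LF_bound: "degree p \<le> K \<Longrightarrow> LF N p = (\<Sum>j\<le>K. coeff p j * N j)"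
  unfolding LF_def by (rule sum.mono_neutral_left) (auto simp: coeff_eq_0)

lemma LF_add: "LF N (p + q) = LF N p + LF N q"
proof -
  let ?K = "max (degree p) (degree q)"
  have "LF N (p + q) = (\<Sum>j\<le>?K. coeff (p + q) j * N j)"
    by (rule LF_bound) (rule degree_add_le_max)
  also have "\<dots> = (\<Sum>j\<le>?K. coeff p j * N j) + (\<Sum>j\<le>?K. coeff q j * N j)"
    by (simp add: sum.distrib distrib_right)
  also have "\<dots> = LF N p + LF N q" by (simp add: LF_bound[of p ?K N] LF_bound[of q ?K N])
  finally show ?thesis .
qed

lemma LF_smult: "LF N (Polynomial.smult c p) = c * LF N p"
proof -
  have "LF N (Polynomial.smult c p) = (\<Sum>j\<le>degree p. coeff (Polynomial.smult c p) j * N j)"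
    by (rule LF_bound) (rule degree_smult_le)
  then show ?thesis by (simp add: LF_def sum_distrib_left mult_ac)
qed

lemma LF_0[simp]: "LF N 0 = 0" by (simp add: LF_def)

lemma LF_sum: "finite A \<Longrightarrow> LF N (\<Sum>a\<in>A. f a) = (\<Sum>a\<in>A. LF N (f a))"
  by (induction A rule: finite_induct) (simp_all add: LF_add)

lemma LF_monom: "LF N (monom c k) = c * N k"
proof -
  have "LF N (monom c k) = (\<Sum>j\<le>k. coeff (monom c k) j * N j)"
    by (rule LF_bound) (simp add: degree_monom_le)
  also have "\<dots> = (\<Sum>j\<le>k. if j = k then c * N j else 0)"
    by (rule sum.cong) (auto simp: coeff_monom)
  also have "\<dots> = c * N k" by simp
  finally show ?thesis .
qed

lemma LF_mult:
  assumes "degree p \<le> dp" "degree q \<le> dq"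
  shows "LF N (p * q) = (\<Sum>a\<le>dp. \<Sum>b\<le>dq. coeff p a * coeff q b * N (a + b))"
proof -
  have "p * q = (\<Sum>a\<le>dp. monom (coeff p a) a) * (\<Sum>b\<le>dq. monom (coeff q b) b)"
    using poly_as_sum_of_monoms'[OF assms(1)] poly_as_sum_of_monoms'[OF assms(2)] by simp
  also have "\<dots> = (\<Sum>a\<le>dp. \<Sum>b\<le>dq. monom (coeff p a * coeff q b) (a + b))"
    by (simp only: sum_product mult_monom)
  finally have "LF N (p * q) = LF N (\<Sum>a\<le>dp. \<Sum>b\<le>dq. monom (coeff p a * coeff q b) (a + b))" by simp
  also have "\<dots> = (\<Sum>a\<le>dp. \<Sum>b\<le>dq. coeff p a * coeff q b * N (a + b))"
    by (simp add: LF_sum LF_monom)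
  finally show ?thesis .
qed

lemma LF_rep:
  assumes "\<forall>j\<le>J. N j = (\<Sum>i<n. w ! i * (u ! i) ^ j)" "degree f \<le> J"
  shows "LF N f = (\<Sum>i<n. w ! i * poly f (u ! i))"
proof -
  have "LF N f = (\<Sum>j\<le>degree f. coeff f j * (\<Sum>i<n. w ! i * (u ! i) ^ j))"
    unfolding LF_def using assms by (intro sum.cong) auto
  also have "\<dots> = (\<Sum>j\<le>degree f. \<Sum>i<n. coeff f j * (w ! i * (u ! i) ^ j))"
    by (simp only: sum_distrib_left)
  also have "\<dots> = (\<Sum>i<n. \<Sum>j\<le>degree f. coeff f j * (w ! i * (u ! i) ^ j))"
    by (rule sum.swap)
  also have "\<dots> = (\<Sum>i<n. w ! i * (\<Sum>j\<le>degree f. coeff f j * (u ! i) ^ j))"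
    by (simp add: sum_distrib_left mult_ac)
  also have "\<dots> = (\<Sum>i<n. w ! i * poly f (u ! i))" by (simp add: poly_altdef)
  finally show ?thesis .
qed

definition pv :: "nat \<Rightarrow> (nat \<Rightarrow> real) \<Rightarrow> real poly" where
  "pv k c = (\<Sum>a\<le>k. monom (c a) a)"

lemma coeff_pv: "coeff (pv k c) i = (if i \<le> k then c i else 0)"
  by (simp add: pv_def coeff_sum coeff_monom)

lemma degree_pv: "degree (pv k c) \<le> k"
  by (rule degree_le) (simp add: coeff_pv)

lemma hankel_carrier: "hankel k N \<in> carrier_mat (k+1) (k+1)"
  by (simp add: hankel_def)

lemma hankel_mulvec:
  assumes "c \<in> carrier_vec (k+1)" "p \<le> k"
  shows "(hankel k N *\<^sub>v c) $ p = (\<Sum>b\<le>k. N (p + b) * c $ b)"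
proof -
  have "(hankel k N *\<^sub>v c) $ p = row (hankel k N) p \<bullet> c"
    using assms by (simp add: hankel_def)
  also have "\<dots> = (\<Sum>b\<in>{0..<k+1}. N (p + b) * c $ b)"
    using assms by (simp add: scalar_prod_def hankel_def)
  also have "{0..<k+1} = {..k}" by auto
  finally show ?thesis .
qed

lemma quad_form:
  assumes "v \<in> carrier_vec (k+1)"
  shows "v \<bullet> (hankel k N *\<^sub>v v) = (\<Sum>a\<le>k. \<Sum>b\<le>k. v $ a * v $ b * N (a + b))"
proof -
  have "v \<bullet> (hankel k N *\<^sub>v v) = (\<Sum>a\<in>{0..<k+1}. v $ a * (hankel k N *\<^sub>v v) $ a)"
    using assms by (simp add: scalar_prod_def hankel_def)
  also have "{0..<k+1} = {..k}" by auto
  also have "(\<Sum>a\<le>k. v $ a * (hankel k N *\<^sub>v v) $ a) = (\<Sum>a\<le>k. v $ a * (\<Sum>b\<le>k. N (a + b) * v $ b))"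
    using assms by (intro sum.cong) (simp_all add: hankel_mulvec)
  also have "\<dots> = (\<Sum>a\<le>k. \<Sum>b\<le>k. v $ a * v $ b * N (a + b))"
    by (simp add: sum_distrib_left mult_ac)
  finally show ?thesis .
qed

lemma pd_imp:
  assumes pd: "pos_def_mat (hankel d N)" and s: "s \<noteq> 0" "degree s \<le> d"
  shows "LF N (s * s) > 0"
proof -
  define v where "v = vec (d+1) (coeff s)"
  have v: "v \<in> carrier_vec (d+1)" by (simp add: v_def)
  have "v \<noteq> 0\<^sub>v (d+1)"
  proof
    assume "v = 0\<^sub>v (d+1)"
    have ci: "coeff s i = 0" for i
    proof (cases "i \<le> d")
      case True
      then have "v $ i = coeff s i" by (simp add: v_def)
      also have "v $ i = 0" using \<open>v = 0\<^sub>v (d+1)\<close> True by simp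
      finally show ?thesis by simp
    next
      case False
      then show ?thesis using s(2) by (simp add: coeff_eq_0)
    qed
    then have "s = 0" by (intro poly_eqI) simp
    then show False using s by simp
  qed
  then have "v \<bullet> (hankel d N *\<^sub>v v) > 0" using pd v
    unfolding pos_def_mat_def by (simp add: hankel_def)
  also have "v \<bullet> (hankel d N *\<^sub>v v) = (\<Sum>a\<le>d. \<Sum>b\<le>d. coeff s a * coeff s b * N (a + b))"
    using quad_form[OF v] by (simp add: v_def)
  also have "\<dots> = LF N (s * s)" using LF_mult[OF s(2) s(2)] by simp
  finally show ?thesis .
qed

lemma pd_intro:
  assumes h: "\<And>s. s \<noteq> 0 \<Longrightarrow> degree s \<le> d \<Longrightarrow> LF N (s * s) > 0"
  shows "pos_def_mat (hankel d N)"
  unfolding pos_def_mat_def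
proof (intro conjI ballI impI)
  show "hankel d N \<in> carrier_mat (dim_row (hankel d N)) (dim_row (hankel d N))"
    by (simp add: hankel_def)
  show "(hankel d N)\<^sup>T = hankel d N"
    by (rule eq_matI) (auto simp: hankel_def add.commute)
  fix v :: "real Matrix.vec" assume v': "v \<in> carrier_vec (dim_row (hankel d N))" and nz: "v \<noteq> 0\<^sub>v (dim_row (hankel d N))"
  have v: "v \<in> carrier_vec (d+1)" using v' by (simp add: hankel_def)
  define s where "s = pv d (\<lambda>a. v $ a)"
  have "s \<noteq> 0"
  proof
    assume "s = 0"
    have "v $ i = 0" if "i \<le> d" for i
    proof -
      have "v $ i = coeff s i" using that by (simp add: s_def coeff_pv)
      then show ?thesis using \<open>s = 0\<close> by simp
    qed
    then have "v = 0\<^sub>v (d+1)" using v by (intro eq_vecI) (auto simp: less_Suc_eq_le)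
    then show False using nz by (simp add: hankel_def)
  qed
  then have "LF N (s * s) > 0" using h degree_pv s_def by blast
  also have "LF N (s * s) = (\<Sum>a\<le>d. \<Sum>b\<le>d. v $ a * v $ b * N (a + b))"
  proof -
    have ds: "degree s \<le> d" unfolding s_def by (rule degree_pv)
    have "LF N (s * s) = (\<Sum>a\<le>d. \<Sum>b\<le>d. coeff s a * coeff s b * N (a + b))"
      by (rule LF_mult[OF ds ds])
    then show ?thesis by (simp add: s_def coeff_pv)
  qed
  also have "\<dots> = v \<bullet> (hankel d N *\<^sub>v v)" using quad_form[OF v] by simp
  finally show "v \<bullet> (hankel (d) N *\<^sub>v v) > 0" .
qed

lemma orth:
  assumes c: "c \<in> carrier_vec (k+1)" and hc: "hankel k N *\<^sub>v c = 0\<^sub>v (k+1)" and g: "degree g \<le> k"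
  shows "LF N (g * pv k (\<lambda>a. c $ a)) = 0"
proof -
  have "LF N (g * pv k (\<lambda>a. c $ a)) = (\<Sum>a\<le>k. \<Sum>b\<le>k. coeff g a * coeff (pv k (\<lambda>a. c $ a)) b * N (a + b))"
    by (rule LF_mult[OF g degree_pv])
  also have "\<dots> = (\<Sum>a\<le>k. coeff g a * (\<Sum>b\<le>k. N (a + b) * c $ b))"
    by (simp add: coeff_pv sum_distrib_left mult_ac)
  also have "\<dots> = (\<Sum>a\<le>k. coeff g a * (hankel k N *\<^sub>v c) $ a)"
    using c by (intro sum.cong) (simp_all add: hankel_mulvec)
  also have "\<dots> = 0" using hc by simp
  finally show ?thesis .
qed

definition lag :: "real list \<Rightarrow> nat \<Rightarrow> nat \<Rightarrow> real poly" where
  "lag u n k = Polynomial.smult (1 / (\<Prod>j\<in>{..<n}-{k}. (u!k - u!j))) (\<Prod>j\<in>{..<n}-{k}. [:-(u!j),1:])"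

lemma lag_deg: "k < n \<Longrightarrow> degree (lag u n k) \<le> n - 1"
proof -
  assume k: "k < n"
  have "degree (lag u n k) \<le> degree (\<Prod>j\<in>{..<n}-{k}. [:-(u!j),1:])"
    unfolding lag_def by (rule degree_smult_le)
  also have "\<dots> \<le> (\<Sum>j\<in>{..<n}-{k}. (degree \<circ> (\<lambda>j. [:-(u!j),1:])) j)"
    by (rule degree_prod_sum_le) simp
  also have "\<dots> = card ({..<n}-{k})" by simp
  also have "\<dots> = n - 1" using k by simp
  finally show ?thesis .
qed

lemma lag_poly:
  assumes "distinct u" "length u = n" "i < n" "k < n"
  shows "poly (lag u n k) (u!i) = (if i = k then 1 else 0)"
proof (cases "i = k")
  case True
  have "(\<Prod>j\<in>{..<n}-{k}. (u!k - u!j)) \<noteq> 0"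
    using assms by (auto simp: nth_eq_iff_index_eq)
  then show ?thesis using True by (simp add: lag_def poly_prod)
next
  case False
  have "(\<Prod>j\<in>{..<n}-{k}. poly [:-(u!j),1:] (u!i)) = 0"
    using False assms by (intro prod_zero) (auto intro!: bexI[of _ i])
  then show ?thesis using False by (simp add: lag_def poly_prod)
qed

lemma interp:
  assumes "n \<ge> 1" "distinct u" "length u = n" "degree h \<le> n - 1"
  shows "h = (\<Sum>k<n. Polynomial.smult (poly h (u!k)) (lag u n k))"
proof (rule poly_eqI_degree[of "set u"])
  fix x assume "x \<in> set u"
  then obtain i where i: "i < n" "x = u ! i" using assms by (auto simp: in_set_conv_nth)
  have "poly (\<Sum>k<n. Polynomial.smult (poly h (u!k)) (lag u n k)) x = (\<Sum>k<n. poly h (u!k) * (if i = k then 1 else 0))"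
    using i assms by (simp add: poly_sum lag_poly)
  also have "\<dots> = (\<Sum>k<n. if k = i then poly h (u!k) else 0)" by (rule sum.cong) auto
  also have "\<dots> = poly h x" using i by simp
  finally show "poly h x = poly (\<Sum>k<n. Polynomial.smult (poly h (u!k)) (lag u n k)) x" by simp
next
  have c: "card (set u) = n" using assms by (simp add: distinct_card)
  show "degree h < card (set u)" using c assms by simp
  have "degree (\<Sum>k<n. Polynomial.smult (poly h (u!k)) (lag u n k)) \<le> n - 1"
    by (rule degree_sum_le) (use lag_deg[of _ n u] in \<open>auto intro: order.trans[OF degree_smult_le]\<close>)
  then show "degree (\<Sum>k<n. Polynomial.smult (poly h (u!k)) (lag u n k)) < card (set u)"
    using c assms by simp
qed

lemma LF_monom_mult:
  assumes "degree r \<le> k"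
  shows "LF N (monom 1 p * r) = (\<Sum>b\<le>k. coeff r b * N (p + b))"
proof -
  have "LF N (monom 1 p * r) = (\<Sum>a\<le>p. \<Sum>b\<le>k. coeff (monom 1 p) a * coeff r b * N (a + b))"
    by (rule LF_mult[OF _ assms]) (simp add: degree_monom_le)
  also have "\<dots> = (\<Sum>a\<le>p. if a = p then (\<Sum>b\<le>k. coeff r b * N (p + b)) else 0)"
    by (rule sum.cong) (auto simp: coeff_monom)
  also have "\<dots> = (\<Sum>b\<le>k. coeff r b * N (p + b))" by simp
  finally show ?thesis .
qed

lemma hank_LF:
  assumes c: "c \<in> carrier_vec (k+1)" and p: "p \<le> k"
  shows "(hankel k N *\<^sub>v c) $ p = LF N (monom 1 p * pv k (\<lambda>a. c $ a))"
proof -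
  have "LF N (monom 1 p * pv k (\<lambda>a. c $ a)) = (\<Sum>b\<le>k. coeff (pv k (\<lambda>a. c $ a)) b * N (p + b))"
    by (rule LF_monom_mult[OF degree_pv])
  also have "\<dots> = (\<Sum>b\<le>k. N (p + b) * c $ b)"
    by (rule sum.cong) (auto simp: coeff_pv)
  finally show ?thesis using hankel_mulvec[OF c p] by simp
qed

definition rep :: "(nat \<Rightarrow> real) \<Rightarrow> nat \<Rightarrow> real list \<Rightarrow> real list \<Rightarrow> bool" where
  "rep N n w u \<longleftrightarrow> length w = n \<and> length u = n \<and> (\<forall>i<n. w ! i > 0) \<and> sorted_wrt (<) u
     \<and> (\<forall>j\<le>2*n. N j = (\<Sum>i<n. w ! i * (u ! i) ^ j))"

lemma rep_distinct: "rep N n w u \<Longrightarrow> distinct u"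
  by (simp add: rep_def strict_sorted_iff)

lemma rep_LF: "rep N n w u \<Longrightarrow> degree f \<le> 2 * n \<Longrightarrow> LF N f = (\<Sum>i<n. w ! i * poly f (u ! i))"
  by (rule LF_rep[of "2*n"]) (auto simp: rep_def)

lemma rep_lag: assumes "rep N n w u" "k < n" shows "LF N (lag u n k) = w ! k"
proof -
  have "LF N (lag u n k) = (\<Sum>i<n. w ! i * poly (lag u n k) (u ! i))"
    using assms lag_deg[of k n u] by (intro rep_LF) auto
  also have "\<dots> = (\<Sum>i<n. if i = k then w ! i else 0)"
    using assms rep_distinct[OF assms(1)] by (intro sum.cong) (auto simp: lag_poly rep_def)
  also have "\<dots> = w ! k" using assms by simp
  finally show ?thesis .
qed

lemma lemB:
  assumes n: "n \<ge> 1" and r: "rep N n w u"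
  shows "pos_def_mat (hankel (n-1) N) \<and> det (hankel n N) = 0"
proof
  have len: "length u = n" "length w = n" and wpos: "\<forall>i<n. w ! i > 0" using r by (auto simp: rep_def)
  have dist: "distinct u" by (rule rep_distinct[OF r])
  show "pos_def_mat (hankel (n-1) N)"
  proof (rule pd_intro)
    fix s :: "real poly" assume s: "s \<noteq> 0" "degree s \<le> n - 1"
    have "degree (s * s) \<le> 2 * n" using s(2) degree_mult_le[of s s] by linarith
    then have "LF N (s * s) = (\<Sum>i<n. w ! i * (poly s (u ! i))^2)"
      by (simp add: rep_LF[OF r] power2_eq_square)
    moreover have "\<exists>i<n. poly s (u ! i) \<noteq> 0"
    proof (rule ccontr)
      assume "\<not> (\<exists>i<n. poly s (u ! i) \<noteq> 0)"
      then have "set u \<subseteq> {x. poly s x = 0}" using len by (auto simp: in_set_conv_nth)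
      then have "card (set u) \<le> card {x. poly s x = 0}" using s(1) by (intro card_mono poly_roots_finite)
      also have "\<dots> \<le> degree s" using s(1) by (rule card_poly_roots_bound)
      finally show False using dist len s(2) n by (simp add: distinct_card)
    qed
    then obtain i where i: "i < n" "poly s (u ! i) \<noteq> 0" by blast
    have "0 < (\<Sum>i<n. w ! i * (poly s (u ! i))^2)"
    proof (rule sum_pos2)
      show "i \<in> {..<n}" using i by simp
      show "0 < w ! i * (poly s (u ! i))^2" using i wpos by simp
      show "0 \<le> w ! j * (poly s (u ! j))^2" if "j \<in> {..<n}" for j
        using that wpos by (simp add: less_imp_le)
    qed simp
    ultimately show "LF N (s * s) > 0" by simp
  qed
  define q where "q = (\<Prod>i<n. [:-(u!i),1:])"
  have q0: "q \<noteq> 0" unfolding q_def by (auto simp: prod_zero_iff)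
  have dq: "degree q \<le> n"
  proof -
    have "degree q \<le> (\<Sum>i<n. (degree \<circ> (\<lambda>i. [:-(u!i),1:])) i)" unfolding q_def by (rule degree_prod_sum_le) simp
    then show ?thesis by simp
  qed
  have qroot: "poly q (u ! i) = 0" if "i < n" for i
    unfolding q_def poly_prod using that by (intro prod_zero) (auto intro!: bexI[of _ i])
  define c where "c = vec (n+1) (coeff q)"
  have c: "c \<in> carrier_vec (n+1)" by (simp add: c_def)
  have pvq: "pv n (\<lambda>a. c $ a) = q"
  proof -
    have "pv n (\<lambda>a. c $ a) = (\<Sum>a\<le>n. monom (coeff q a) a)"
      unfolding pv_def c_def by (intro sum.cong) auto
    then show ?thesis using poly_as_sum_of_monoms'[OF dq] by simp
  qed
  have "c \<noteq> 0\<^sub>v (n+1)"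
  proof
    assume "c = 0\<^sub>v (n+1)"
    then have "c $ degree q = 0" using dq by simp
    then have "coeff q (degree q) = 0" using dq by (simp add: c_def)
    then show False using q0 by simp
  qed
  moreover have "hankel n N *\<^sub>v c = 0\<^sub>v (n+1)"
  proof (rule eq_vecI)
    show "dim_vec (hankel n N *\<^sub>v c) = dim_vec (0\<^sub>v (n+1))" by (simp add: hankel_def)
    fix p assume "p < dim_vec (0\<^sub>v (n+1) :: real Matrix.vec)"
    then have p: "p \<le> n" by simp
    have "(hankel n N *\<^sub>v c) $ p = LF N (monom 1 p * q)" using hank_LF[OF c p] pvq by simp
    also have "\<dots> = (\<Sum>i<n. w ! i * poly (monom 1 p * q) (u ! i))"
    proof (rule rep_LF[OF r])
      have "degree (monom 1 p * q) \<le> p + n"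
        using degree_mult_le[of "monom (1::real) p" q] degree_monom_le[of "1::real" p] dq by linarith
      then show "degree (monom 1 p * q) \<le> 2 * n" using p by linarith
    qed
    also have "\<dots> = 0" by (simp add: qroot)
    finally show "(hankel n N *\<^sub>v c) $ p = 0\<^sub>v (n+1) $ p" using p by simp
  qed
  ultimately show "det (hankel n N) = 0"
    using det_0_iff_vec_prod_zero[OF hankel_carrier] c by blast
qed

lemma kernel_poly:
  assumes "det (hankel n N) = 0"
  shows "\<exists>q. q \<noteq> 0 \<and> degree q \<le> n \<and> (\<forall>g. degree g \<le> n \<longrightarrow> LF N (g * q) = 0)"
proof -
  obtain c where c: "c \<in> carrier_vec (n+1)" "c \<noteq> 0\<^sub>v (n+1)" "hankel n N *\<^sub>v c = 0\<^sub>v (n+1)"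
    using det_0_iff_vec_prod_zero[OF hankel_carrier] assms by blast
  define q where "q = pv n (\<lambda>a. c $ a)"
  have "q \<noteq> 0"
  proof
    assume "q = 0"
    have "c $ i = 0" if "i \<le> n" for i
    proof -
      have "c $ i = coeff q i" using that by (simp add: q_def coeff_pv)
      then show ?thesis using \<open>q = 0\<close> by simp
    qed
    then have "c = 0\<^sub>v (n+1)" using c(1) by (intro eq_vecI) (auto simp: less_Suc_eq_le)
    then show False using c(2) by simp
  qed
  moreover have "degree q \<le> n" unfolding q_def by (rule degree_pv)
  moreover have "\<forall>g. degree g \<le> n \<longrightarrow> LF N (g * q) = 0"
    using orth[OF c(1) c(3)] q_def by blast
  ultimately show ?thesis by blast
qed

lemma rep_roots:
  assumes n: "n \<ge> 1" and r: "rep N n w u" and q: "q \<noteq> 0" "degree q \<le> n"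
    and orth: "\<forall>g. degree g \<le> n \<longrightarrow> LF N (g * q) = 0"
  shows "set u = {x. poly q x = 0}"
proof -
  have len: "length u = n" and wpos: "\<forall>i<n. w ! i > 0" using r by (auto simp: rep_def)
  have dist: "distinct u" by (rule rep_distinct[OF r])
  have root: "poly q (u ! k) = 0" if k: "k < n" for k
  proof -
    have dl: "degree (lag u n k) \<le> n - 1" using lag_deg[OF k] .
    then have "LF N (lag u n k * q) = 0" using orth n by auto
    moreover have "LF N (lag u n k * q) = (\<Sum>i<n. w ! i * poly (lag u n k * q) (u ! i))"
    proof (rule rep_LF[OF r])
      show "degree (lag u n k * q) \<le> 2 * n" using degree_mult_le[of "lag u n k" q] dl q(2) by linarith
    qed
    moreover have "(\<Sum>i<n. w ! i * poly (lag u n k * q) (u ! i)) = (\<Sum>i<n. if i = k then w ! k * poly q (u ! k) else 0)"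
      using k dist len by (intro sum.cong) (auto simp: lag_poly)
    ultimately have "w ! k * poly q (u ! k) = 0" using k by simp
    then show ?thesis using wpos k by (metis less_irrefl mult_eq_0_iff)
  qed
  have sub: "set u \<subseteq> {x. poly q x = 0}" using root len by (auto simp: in_set_conv_nth)
  have fin: "finite {x. poly q x = 0}" using q(1) by (rule poly_roots_finite)
  have "card {x. poly q x = 0} \<le> card (set u)"
    using card_poly_roots_bound[OF q(1)] q(2) dist len by (simp add: distinct_card)
  then show ?thesis using card_subset_eq[OF fin sub] sub fin by (metis card_seteq)
qed

lemma lemD:
  assumes n: "n \<ge> 1" and d: "det (hankel n N) = 0" and r1: "rep N n w u" and r2: "rep N n w' u'"
  shows "w = w' \<and> u = u'"
proof -
  obtain q where q: "q \<noteq> 0" "degree q \<le> n" "\<forall>g. degree g \<le> n \<longrightarrow> LF N (g * q) = 0"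
    using kernel_poly[OF d] by blast
  have "set u = set u'" using rep_roots[OF n r1 q] rep_roots[OF n r2 q] by simp
  then have uu: "u = u'"
    using r1 r2 by (intro sorted_distinct_set_unique) (auto simp: rep_def strict_sorted_iff)
  have "w ! k = w' ! k" if "k < n" for k
    using rep_lag[OF r1 that] rep_lag[OF r2 that] uu by simp
  then have "w = w'" using r1 r2 by (intro nth_equalityI) (auto simp: rep_def)
  then show ?thesis using uu by simp
qed

lemma ring_id: "(A * A + B) * s * s = (A * s) * (A * s) + B * (s * s)" for A B s :: "'a::comm_ring"
  by (simp add: algebra_simps)

lemma lemC:
  assumes n: "n \<ge> 1" and pd: "pos_def_mat (hankel (n-1) N)" and d: "det (hankel n N) = 0"
  shows "\<exists>w u. rep N n w u"
proof -
  obtain q where q0: "q \<noteq> 0" and qd: "degree q \<le> n" and orth: "\<forall>g. degree g \<le> n \<longrightarrow> LF N (g * q) = 0"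
    using kernel_poly[OF d] by blast
  have P: "LF N (s * s) > 0" if "s \<noteq> 0" "degree s \<le> n - 1" for s
    using pd_imp[OF pd that] .
  have dq: "degree q = n"
  proof (rule ccontr)
    assume "degree q \<noteq> n"
    then have "degree q \<le> n - 1" using qd by simp
    then have "LF N (q * q) > 0" using P q0 by blast
    moreover have "LF N (q * q) = 0" using orth qd by blast
    ultimately show False by simp
  qed
  have nd: "q \<noteq> [:-t,1:] * [:-t,1:] * s" for t s
  proof
    assume qs: "q = [:-t,1:] * [:-t,1:] * s"
    have s0: "s \<noteq> 0" using q0 qs by auto
    define r where "r = [:-t,1:] * s"
    have r0: "r \<noteq> 0" unfolding r_def using s0 by (intro no_zero_divisors) simp_all
    have degr: "degree r = Suc (degree s)" unfolding r_def using s0 by (subst degree_mult_eq) auto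
    have "q = [:-t,1:] * r" using qs by (simp only: r_def mult_ac)
    then have "degree q = Suc (degree r)" using r0 by (simp only:) (subst degree_mult_eq, auto)
    then have dr: "degree r = n - 1" using dq by simp
    have "LF N (r * r) > 0" using P[OF r0] dr by simp
    moreover have "r * r = s * q" using qs by (simp only: r_def mult_ac)
    moreover have "LF N (s * q) = 0" using orth degr dr by auto
    ultimately show False by simp
  qed
  have nq: "q \<noteq> [:a^2+b^2,-2*a,1:] * s" if b: "b \<noteq> 0" for a b s
  proof
    assume qs: "q = [:a^2+b^2,-2*a,1:] * s"
    have s0: "s \<noteq> 0" using q0 qs by auto
    define r where "r = [:-a,1:] * s"
    have r0: "r \<noteq> 0" unfolding r_def using s0 by (intro no_zero_divisors) simp_all
    have degr: "degree r = Suc (degree s)" unfolding r_def using s0 by (subst degree_mult_eq) auto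
    have "degree q = Suc (Suc (degree s))" unfolding qs using s0 by (subst degree_mult_eq) auto
    then have dr: "degree r = n - 1" and ds: "degree s \<le> n - 1" using dq degr by auto
    have Deq: "[:a^2+b^2,-2*a,1:] = [:-a,1:] * [:-a,1:] + [:b^2:]"
      by (simp add: power2_eq_square)
    have "q * s = r * r + [:b^2:] * (s * s)"
      unfolding qs Deq r_def by (rule ring_id)
    then have "LF N (q * s) = LF N (r * r) + b^2 * LF N (s * s)"
      by (simp add: LF_add LF_smult)
    moreover have "LF N (r * r) > 0" using P[OF r0] dr by simp
    moreover have "LF N (s * s) > 0" using P[OF s0 ds] .
    moreover have "b^2 > 0" using b by simp
    moreover have "LF N (s * q) = 0" using orth ds n by auto
    moreover have "LF N (q * s) = LF N (s * q)" by (simp add: mult.commute)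
    moreover have "b^2 * LF N (s * s) > 0" using \<open>b^2 > 0\<close> \<open>LF N (s * s) > 0\<close> by (rule mult_pos_pos)
    ultimately show False by linarith
  qed
  define R where "R = {x. poly q x = 0}"
  have finR: "finite R" unfolding R_def using q0 by (rule poly_roots_finite)
  have cardR: "card R = n" unfolding R_def using roots_card[OF q0 nd nq] dq by simp
  define u where "u = sorted_list_of_set R"
  have su: "set u = R" and lenu: "length u = n" and sortu: "sorted_wrt (<) u" and dist: "distinct u"
    using finR cardR by (simp_all add: u_def)
  have uroot: "poly q (u ! k) = 0" if "k < n" for k
    using su lenu that R_def nth_mem by blast
  define w where "w = map (\<lambda>k. LF N (lag u n k)) [0..<n]"
  have lenw: "length w = n" by (simp add: w_def)
  have repf: "LF N f = (\<Sum>k<n. w ! k * poly f (u ! k))" if df: "degree f \<le> 2 * n" for f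
  proof -
    define g where "g = f div q"
    define h where "h = f mod q"
    have fgh: "f = g * q + h" by (simp add: g_def h_def)
    have dh: "degree h \<le> n - 1" using degree_mod_less[OF q0, of f] dq h_def by auto
    have dg: "degree g \<le> n"
    proof (cases "g = 0")
      case False
      have "degree (g * q) = degree g + n" using False q0 dq by (simp add: degree_mult_eq)
      moreover have "g * q = f - h" using fgh by simp
      moreover have "degree (f - h) \<le> 2 * n" using degree_diff_le_max[of f h] df dh by linarith
      ultimately have "degree g + n \<le> 2 * n" by simp
      then show ?thesis by linarith
    qed simp
    have "LF N f = LF N h" using fgh orth dg by (simp add: LF_add)
    also have "h = (\<Sum>k<n. Polynomial.smult (poly h (u!k)) (lag u n k))"
      by (rule interp[OF n dist lenu dh])
    also have "LF N \<dots> = (\<Sum>k<n. poly h (u!k) * w ! k)"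
      by (simp add: LF_sum LF_smult w_def)
    also have "\<dots> = (\<Sum>k<n. w ! k * poly f (u ! k))"
    proof (rule sum.cong)
      fix k assume "k \<in> {..<n}"
      then have "poly q (u ! k) = 0" using uroot by simp
      then have "poly h (u ! k) = poly f (u ! k)" using fgh by (simp add: poly_add poly_mult)
      then show "poly h (u!k) * w ! k = w ! k * poly f (u ! k)" by simp
    qed simp
    finally show ?thesis .
  qed
  have wpos: "w ! k > 0" if k: "k < n" for k
  proof -
    have l1: "poly (lag u n k) (u ! k) = 1" using lag_poly[OF dist lenu k k] by simp
    then have l0: "lag u n k \<noteq> 0" by auto
    have dl: "degree (lag u n k) \<le> n - 1" using lag_deg[OF k] .
    have "LF N (lag u n k * lag u n k) > 0" using P[OF l0 dl] .
    moreover have "LF N (lag u n k * lag u n k) = (\<Sum>i<n. w ! i * poly (lag u n k * lag u n k) (u ! i))"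
      by (rule repf) (use degree_mult_le[of "lag u n k" "lag u n k"] dl in linarith)
    moreover have "\<dots> = (\<Sum>i<n. if i = k then w ! k else 0)"
      using k dist lenu by (intro sum.cong) (auto simp: lag_poly)
    ultimately show ?thesis using k by simp
  qed
  have "rep N n w u"
    unfolding rep_def
  proof (intro conjI allI impI)
    show "length w = n" "length u = n" "sorted_wrt (<) u" by (fact lenw lenu sortu)+
    show "0 < w ! i" if "i < n" for i using wpos that .
    fix j assume j: "j \<le> 2 * n"
    have "N j = LF N (monom 1 j)" by (simp add: LF_monom)
    also have "\<dots> = (\<Sum>k<n. w ! k * poly (monom 1 j) (u ! k))"
      by (rule repf) (use j degree_monom_le[of "1::real" j] in linarith)
    also have "\<dots> = (\<Sum>i<n. w ! i * (u ! i) ^ j)" by (simp add: poly_monom)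
    finally show "N j = (\<Sum>i<n. w ! i * (u ! i) ^ j)" .
  qed
  then show ?thesis by blast
qed

lemma P_iff_rep:
  assumes m0: "m 0 = 1"
  shows "(length w = n \<and> length u = n \<and> (\<forall>i<n. w ! i > 0) \<and> sorted_wrt (<) u \<and> \<sigma> > 0
            \<and> (\<forall>j\<le>2 * n. Mmap m w u \<sigma> j = M j)) \<longleftrightarrow> (\<sigma> > 0 \<and> rep (Mstar m M \<sigma>) n w u)"
proof (cases "length w = n")
  case True
  have "(\<forall>j\<le>2 * n. Mmap m w u \<sigma> j = M j) \<longleftrightarrow> (\<forall>j\<le>2 * n. TA m \<sigma> (\<lambda>i. \<Sum>k<length w. w ! k * (u ! k) ^ i) j = M j)"
    by (simp add: Mmap_TA)
  also have "\<dots> \<longleftrightarrow> (\<forall>j\<le>2 * n. Mstar m M \<sigma> j = (\<Sum>k<length w. w ! k * (u ! k) ^ j))"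
    by (rule TA_TB_equiv[of m, OF m0])
  finally show ?thesis using True by (auto simp: rep_def)
qed (auto simp: rep_def)

theorem theorem2p3:
  fixes K :: "real \<Rightarrow> real" and n :: nat and M :: "nat \<Rightarrow> real"
  assumes K_nonneg: "\<And>x. K x \<ge> 0"
    and K_moments: "\<And>j. integrable lborel (\<lambda>x. x ^ j * K x)"
    and m0: "kmom K 0 = 1" and m1: "kmom K 1 = 0" and m2: "kmom K 2 = 1"
    and n: "n \<ge> 1"
  shows "(\<exists>!(w, u, \<sigma>). length w = n \<and> length u = n \<and> (\<forall>i<n. w ! i > 0)
            \<and> sorted_wrt (<) u \<and> \<sigma> > 0
            \<and> (\<forall>j\<le>2 * n. Mmap (kmom K) w u \<sigma> j = M j))
     \<longleftrightarrow>
     (\<exists>!\<sigma>0. \<sigma>0 > 0 \<and> Pn (kmom K) n M \<sigma>0 = 0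
            \<and> pos_def_mat (hankel (n - 1) (Mstar (kmom K) M \<sigma>0)))"
proof -
  let ?m = "kmom K"
  define P where "P = (\<lambda>(w, u, \<sigma>). length w = n \<and> length u = n \<and> (\<forall>i<n. w ! i > 0)
            \<and> sorted_wrt (<) u \<and> \<sigma> > 0
            \<and> (\<forall>j\<le>2 * n. Mmap ?m w u \<sigma> j = M j))"
  define Q where "Q = (\<lambda>\<sigma>0. \<sigma>0 > 0 \<and> Pn ?m n M \<sigma>0 = 0
            \<and> pos_def_mat (hankel (n - 1) (Mstar ?m M \<sigma>0)))"
  have Pr: "P (w, u, s) \<longleftrightarrow> s > 0 \<and> rep (Mstar ?m M s) n w u" for w u s
    unfolding P_def using P_iff_rep[of ?m, OF m0] by simp
  have repQ: "Q s" if "s > 0" "rep (Mstar ?m M s) n w u" for s w u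
    using lemB[OF n that(2)] that(1) by (simp add: Q_def Pn_def)
  have Qrep: "\<exists>w u. rep (Mstar ?m M s) n w u" if "Q s" for s
    using lemC[OF n] that by (simp add: Q_def Pn_def)
  have "(\<exists>!x. P x) \<longleftrightarrow> (\<exists>!s. Q s)"
  proof
    assume "\<exists>!x. P x"
    then obtain w u s where Pw: "P (w, u, s)" and uq: "\<And>x. P x \<Longrightarrow> x = (w, u, s)"
      by (metis prod_cases3)
    show "\<exists>!s. Q s"
    proof (rule ex1I[of _ s])
      show "Q s" using Pw Pr repQ by blast
      fix s' assume "Q s'"
      then obtain w' u' where "rep (Mstar ?m M s') n w' u'" using Qrep by blast
      then have "P (w', u', s')" using Pr \<open>Q s'\<close> by (simp add: Q_def)
      then show "s' = s" using uq by blast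
    qed
  next
    assume "\<exists>!s. Q s"
    then obtain s where Qs: "Q s" and uq: "\<And>s'. Q s' \<Longrightarrow> s' = s" by blast
    obtain w u where r: "rep (Mstar ?m M s) n w u" using Qrep[OF Qs] by blast
    have s0: "s > 0" using Qs by (simp add: Q_def)
    show "\<exists>!x. P x"
    proof (rule ex1I[of _ "(w, u, s)"])
      show "P (w, u, s)" using Pr r s0 by simp
      fix x assume Px: "P x"
      obtain w' u' s' where x: "x = (w', u', s')" by (rule prod_cases3)
      have r': "rep (Mstar ?m M s') n w' u'" and s'0: "s' > 0" using Px Pr x by auto
      have "s' = s" using uq repQ[OF s'0 r'] by blast
      then have "w' = w \<and> u' = u"
        using lemD[OF n _ r' ] r lemB[OF n r] by auto
      then show "x = (w, u, s)" using x \<open>s' = s\<close> by simp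
    qed
  qed
  then show ?thesis unfolding P_def Q_def .
qed

end
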